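(* Let $\Omega=\{0,1\}^{\mathbb N_0}$ with canonical projections $X_i$, $i\in\mathbb N_0$, $\mathcal F=\sigma(X_i:i\in\mathbb N_0)$, and $\mathbb P=\mathrm{Ber}(1/2)\times\prod_{n\in\mathbb N}\mathrm{Ber}(2^{-n})$ (so the $X_i$ are independent, $\mathbb P(X_0=1)=1/2$, $\mathbb P(X_n=1)=2^{-n}$ for $n\ge1$). For $n\in\mathbb N_0$ let $Y_n:=\max(X_0,X_n)$ and $\mathcal B_n:=\sigma(\sigma(Y_n)\cup\mathcal N)$ (so $\mathcal B_0=\sigma(\sigma(X_0)\cup\mathcal N)$). Then the sequence $(\mathcal B_n)_{n\in\mathbb N}$ is not ultimately equal to $\mathcal B_0$, and for every $p\in(1,\infty)$, $\|\mathbb P_{\mathcal B_n}-\mathbb P_{\mathcal B_0}\|_{L^p\to L^p}\to0$ as $n\to\infty$. More precisely, there is $C_p\in(0,\infty)$ depending only on $p$ such that $\mathbb E^{\mathbb P}|\mathbb P_{\mathcal B_n}f-\mathbb P_{\mathcal B_0}f|^p\le C_p\,2^{-n((p-1)\wedge1)}\,\mathbb E^{\mathbb P}|f|^p$ for all $f\in L^p(\mathbb P)$ and $n\in\mathbb N$.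
   Context: $\mathrm{Ber}(r)$ denotes the Bernoulli law on $\{0,1\}$ with $\mathrm{Ber}(r)(\{1\})=r$. $\mathcal N:=\{F\in\mathcal F:\mathbb P(F)=0\}$. For a sub-$\sigma$-field $\mathcal A$, $\mathbb P_{\mathcal A}f:=\mathbb E^{\mathbb P}[f\mid\mathcal A]$, viewed as a bounded linear operator on the real normed space $L^p(\mathbb P)$, and $\|\cdot\|_{L^p\to L^p}$ is the operator norm. *)

theory Defs
  imports "HOL-Probability.Probability"
begin

text \<open>Bernoulli parameters: Ber(1/2) for index 0, Ber(2^-n) for n >= 1.
  The value 1 of Ber is rendered as True.\<close>
definition bern_param :: "nat \<Rightarrow> real" where
  "bern_param i = (if i = 0 then 1/2 else 1 / 2 ^ i)"

text \<open>The product probability space on Omega = bool^N0; X_i is the projection omega i.\<close>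
definition PP :: "(nat \<Rightarrow> bool) measure" where
  "PP = PiM UNIV (\<lambda>i. measure_pmf (bernoulli_pmf (bern_param i)))"

definition Y :: "nat \<Rightarrow> (nat \<Rightarrow> bool) \<Rightarrow> bool" where
  "Y n \<omega> = (\<omega> 0 \<or> \<omega> n)"

definition BB :: "nat \<Rightarrow> (nat \<Rightarrow> bool) measure" where
  "BB n = sigma (space PP) ({Y n -` A \<inter> space PP | A. A \<subseteq> (UNIV :: bool set)} \<union> null_sets PP)"

definition Lp_fun :: "real \<Rightarrow> ((nat \<Rightarrow> bool) \<Rightarrow> real) \<Rightarrow> bool" where
  "Lp_fun p f \<longleftrightarrow> f \<in> borel_measurable PP \<and> integrable PP (\<lambda>x. \<bar>f x\<bar> powr p)"

definition cond_diff_opnorm :: "real \<Rightarrow> nat \<Rightarrow> real" where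
  "cond_diff_opnorm p n =
     (SUP f \<in> {f. Lp_fun p f \<and> (\<integral>x. \<bar>f x\<bar> powr p \<partial>PP) \<le> 1}.
        (\<integral>x. \<bar>real_cond_exp PP (BB n) f x - real_cond_exp PP (BB 0) f x\<bar> powr p \<partial>PP) powr (1 / p))"

end

theory Submission
  imports Defs
begin

lemma bern_param_01: "0 \<le> bern_param i \<and> bern_param i \<le> 1"
  by (auto simp: bern_param_def)

interpretation PPprod: product_prob_space "\<lambda>i. measure_pmf (bernoulli_pmf (bern_param i))" UNIV
  by unfold_locales

lemma PP_prob: "prob_space PP"
  unfolding PP_def by (rule PPprod.P.prob_space_axioms)

lemma space_PP[simp]: "space PP = UNIV"
  unfolding PP_def by (simp add: space_PiM)

lemma sets_coord[measurable]: "{\<omega>. \<omega> i} \<in> sets PP"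
proof -
  have "(\<lambda>\<omega>. \<omega> i) \<in> measurable PP (measure_pmf (bernoulli_pmf (bern_param i)))"
    unfolding PP_def by (rule measurable_component_singleton) simp
  then have "(\<lambda>\<omega>. \<omega> i) -` {True} \<inter> space PP \<in> sets PP"
    by (rule measurable_sets) simp
  then show ?thesis by (simp add: vimage_def)
qed

lemma emeasure_PP_two:
  assumes "i \<noteq> j"
  shows "emeasure PP {\<omega>. \<omega> i = a \<and> \<omega> j = b} =
     emeasure (measure_pmf (bernoulli_pmf (bern_param i))) {a} * emeasure (measure_pmf (bernoulli_pmf (bern_param j))) {b}"
proof -
  have "{\<omega>. \<omega> i = a \<and> \<omega> j = b} = prod_emb UNIV (\<lambda>i. measure_pmf (bernoulli_pmf (bern_param i))) {i,j} (PiE {i,j} (\<lambda>k. if k = i then {a} else {b}))"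
    using assms by (auto simp: prod_emb_def PiE_iff space_PiM)
  then show ?thesis unfolding PP_def
    using assms by (simp add: PPprod.emeasure_PiM_emb)
qed

lemma emeasure_PP_one:
  shows "emeasure PP {\<omega>. \<omega> i = a} = emeasure (measure_pmf (bernoulli_pmf (bern_param i))) {a}"
proof -
  have "{\<omega>. \<omega> i = a} = prod_emb UNIV (\<lambda>i. measure_pmf (bernoulli_pmf (bern_param i))) {i} (PiE {i} (\<lambda>k. {a}))"
    by (auto simp: prod_emb_def PiE_iff space_PiM fun_eq_iff restrict_def)
  then show ?thesis unfolding PP_def
    using PPprod.emeasure_PiM_emb[of "{i}" "\<lambda>k. {a}"] by simp
qed

lemma bern_em: "emeasure (measure_pmf (bernoulli_pmf (bern_param i))) {a} = ennreal (if a then bern_param i else 1 - bern_param i)"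
  using bern_param_01[of i] by (simp add: emeasure_pmf_single)

definition near :: "'a measure \<Rightarrow> 'a set \<Rightarrow> 'a set set" where
  "near M S = {A \<in> sets M. \<exists>T\<in>{{},S,UNIV - S,UNIV}. (A - T) \<union> (T - A) \<in> null_sets M}"

lemma union_two:
  assumes "\<And>i. U i = {} \<or> U i = W"
  shows "(\<Union>i. U i) = {} \<or> (\<Union>i. U i) = W"
proof (cases "\<exists>i. U i = W")
  case True
  then obtain i where i: "U i = W" by blast
  have "U j \<subseteq> W" for j using assms[of j] by auto
  then have "(\<Union>i. U i) \<subseteq> W" by (simp add: UN_least)
  moreover have "W \<subseteq> (\<Union>i. U i)" using i by auto
  ultimately show ?thesis by (simp add: subset_antisym)
next
  case False
  then have "\<And>i. U i = {}" using assms by metis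
  then show ?thesis by simp
qed

lemma four_aux:
  assumes "U \<inter> S = {} \<or> U \<inter> S = S" "U - S = {} \<or> U - S = UNIV - S"
  shows "U \<in> {{},S,UNIV - S,UNIV}"
proof -
  have u: "U = (U \<inter> S) \<union> (U - S)" by blast
  show ?thesis using assms
  proof (elim disjE)
    assume a: "U \<inter> S = {}" and b: "U - S = {}" then have "U = {} \<union> {}" by (subst u) (simp only: a b)
    then show ?thesis by simp
  next
    assume a: "U \<inter> S = {}" and b: "U - S = UNIV - S" then have "U = {} \<union> (UNIV - S)" by (subst u) (simp only: a b)
    then show ?thesis by simp
  next
    assume a: "U \<inter> S = S" and b: "U - S = {}" then have "U = S \<union> {}" by (subst u) (simp only: a b)
    then show ?thesis by simp
  next
    assume a: "U \<inter> S = S" and b: "U - S = UNIV - S" then have "U = S \<union> (UNIV - S)" by (subst u) (simp only: a b)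
    then show ?thesis by simp
  qed
qed
lemma union_four:
  assumes "\<And>i. T i \<in> {{},S,UNIV - S,UNIV}"
  shows "(\<Union>i. T i) \<in> {{},S,UNIV - S,UNIV}"
proof -
  have a: "T i \<inter> S = {} \<or> T i \<inter> S = S" for i
    using assms[of i] by (elim insertE) auto
  have b: "T i - S = {} \<or> T i - S = UNIV - S" for i
    using assms[of i] by (elim insertE) auto
  have e1: "(\<Union>i. T i) \<inter> S = (\<Union>i. T i \<inter> S)" by blast
  have e2: "(\<Union>i. T i) - S = (\<Union>i. T i - S)" by blast
  have c1: "(\<Union>i. T i) \<inter> S = {} \<or> (\<Union>i. T i) \<inter> S = S"
    unfolding e1 by (rule union_two[of "\<lambda>i. T i \<inter> S" S, OF a])
  have c2: "(\<Union>i. T i) - S = {} \<or> (\<Union>i. T i) - S = UNIV - S"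
    unfolding e2 by (rule union_two[of "\<lambda>i. T i - S" "UNIV - S", OF b])
  show ?thesis by (rule four_aux[OF c1 c2])
qed


lemma nearI: "A \<in> sets M \<Longrightarrow> T \<in> {{},S,UNIV - S,UNIV} \<Longrightarrow> (A - T) \<union> (T - A) \<in> null_sets M \<Longrightarrow> A \<in> near M S"
  unfolding near_def by blast

lemma nearE: "A \<in> near M S \<Longrightarrow> (\<And>T. A \<in> sets M \<Longrightarrow> T \<in> {{},S,UNIV - S,UNIV} \<Longrightarrow> (A - T) \<union> (T - A) \<in> null_sets M \<Longrightarrow> P) \<Longrightarrow> P"
  unfolding near_def by blast

lemma compl_four: "T \<in> {{},S,UNIV - S,UNIV} \<Longrightarrow> UNIV - T \<in> {{},S,UNIV - S,UNIV}"
proof -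
  assume "T \<in> {{},S,UNIV - S,UNIV}"
  then consider "T = {}" | "T = S" | "T = UNIV - S" | "T = UNIV" by blast
  then show ?thesis
  proof cases
    case 1 then show ?thesis by simp
  next
    case 2 then show ?thesis by simp
  next
    case 3 then have "UNIV - T = S" by (simp add: Diff_Diff_Int)
    then show ?thesis by simp
  next
    case 4 then show ?thesis by simp
  qed
qed

lemma sigma_near:
  assumes sp: "space M = UNIV" and G: "G \<subseteq> near M S" and SM: "S \<in> sets M"
  shows "sigma_sets UNIV G \<subseteq> near M S"
proof
  fix A assume "A \<in> sigma_sets UNIV G"
  then show "A \<in> near M S"
  proof (induction rule: sigma_sets.induct)
    case (Basic a) then show ?case using G by (rule subsetD[rotated])
  next
    case Empty show ?case by (rule nearI[of _ _ "{}"]) auto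
  next
    case (Compl a)
    from Compl.IH show ?case
    proof (rule nearE)
      fix T assume a: "a \<in> sets M" and T: "T \<in> {{},S,UNIV - S,UNIV}" and n: "(a - T) \<union> (T - a) \<in> null_sets M"
      have e: "((UNIV - a) - (UNIV - T)) \<union> ((UNIV - T) - (UNIV - a)) = (a - T) \<union> (T - a)" by blast
      have "UNIV - a \<in> sets M" using sets.compl_sets[OF a] sp by simp
      then show "UNIV - a \<in> near M S"
        by (rule nearI[OF _ compl_four[OF T]]) (simp only: e n)
    qed
  next
    case (Union a)
    have "\<forall>i. \<exists>T. T \<in> {{},S,UNIV - S,UNIV} \<and> (a i - T) \<union> (T - a i) \<in> null_sets M"
    proof
      fix i from Union.IH[of i] show "\<exists>T. T \<in> {{},S,UNIV - S,UNIV} \<and> (a i - T) \<union> (T - a i) \<in> null_sets M"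
        by (rule nearE) blast
    qed
    then obtain T where T: "\<And>i. T i \<in> {{},S,UNIV - S,UNIV}" "\<And>i. (a i - T i) \<union> (T i - a i) \<in> null_sets M"
      by metis
    have as: "\<And>i. a i \<in> sets M" using Union.IH by (rule nearE)
    have sub: "((\<Union>i. a i) - (\<Union>i. T i)) \<union> ((\<Union>i. T i) - (\<Union>i. a i)) \<subseteq> (\<Union>i. (a i - T i) \<union> (T i - a i))"
      by blast
    have nu: "(\<Union>i. (a i - T i) \<union> (T i - a i)) \<in> null_sets M"
      using T(2) by (intro null_sets_UN) 
    have SS: "UNIV - S \<in> sets M" "UNIV \<in> sets M"
      using sets.compl_sets[OF SM] sets.top[of M] sp by auto
    have Ts: "T i \<in> sets M" for i
    proof -
      from T(1)[of i] consider "T i = {}" | "T i = S" | "T i = UNIV - S" | "T i = UNIV" by blast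
      then show ?thesis using SS SM by cases simp_all
    qed
    have m: "((\<Union>i. a i) - (\<Union>i. T i)) \<union> ((\<Union>i. T i) - (\<Union>i. a i)) \<in> sets M"
      using Ts as by (intro sets.Un sets.Diff sets.countable_UN') auto
    have "((\<Union>i. a i) - (\<Union>i. T i)) \<union> ((\<Union>i. T i) - (\<Union>i. a i)) \<in> null_sets M"
      by (rule null_sets_subset[OF nu m sub])
    moreover have "(\<Union>i. a i) \<in> sets M" using as by auto
    moreover have "(\<Union>i. T i) \<in> {{},S,UNIV - S,UNIV}" using T(1) by (rule union_four)
    ultimately show ?case by (intro nearI)
  qed
qed

definition Sn :: "nat \<Rightarrow> (nat \<Rightarrow> bool) set" where "Sn n = {\<omega>. \<omega> 0 \<or> \<omega> n}"

definition gen :: "nat \<Rightarrow> (nat \<Rightarrow> bool) set set" where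
  "gen n = {Y n -` A \<inter> space PP | A. A \<subseteq> (UNIV :: bool set)} \<union> null_sets PP"

lemma Sn_sets[measurable]: "Sn n \<in> sets PP"
proof -
  have "Sn n = {\<omega>. \<omega> 0} \<union> {\<omega>. \<omega> n}" by (auto simp: Sn_def)
  then show ?thesis using sets_coord[of 0] sets_coord[of n] by simp
qed

lemma space_BB[simp]: "space (BB n) = UNIV"
  unfolding BB_def by (simp add: space_measure_of_conv)

lemma sets_BB: "sets (BB n) = sigma_sets UNIV (gen n)"
  unfolding BB_def gen_def by (subst sets_measure_of) auto

lemma Y_preimage: "Y n -` A \<inter> space PP \<in> {{}, Sn n, UNIV - Sn n, UNIV}"
proof (cases "True \<in> A")
  case True
  show ?thesis
  proof (cases "False \<in> A")
    case False
    have h: "(b \<in> A) = b" for b using True False by (cases b) auto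
    have "Y n -` A \<inter> space PP = Sn n" by (simp add: h Y_def Sn_def vimage_def)
    then show ?thesis by simp
  next
    case F: True
    have h: "(b \<in> A) = True" for b using True F by (cases b) auto
    have "Y n -` A \<inter> space PP = UNIV" by (simp add: h vimage_def)
    then show ?thesis by simp
  qed
next
  case False
  show ?thesis
  proof (cases "False \<in> A")
    case F: False
    have h: "(b \<in> A) = False" for b using False F by (cases b) auto
    have "Y n -` A \<inter> space PP = {}" by (simp add: h vimage_def)
    then show ?thesis by simp
  next
    case True
    have h: "(b \<in> A) = (\<not> b)" for b using True False by (cases b) auto
    have "Y n -` A \<inter> space PP = UNIV - Sn n" by (auto simp add: h Y_def Sn_def vimage_def)
    then show ?thesis by simp
  qed
qed

lemma gen_near: "gen n \<subseteq> near PP (Sn n)"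
proof
  fix A assume "A \<in> gen n"
  then consider B where "A = Y n -` B \<inter> space PP" | "A \<in> null_sets PP"
    unfolding gen_def by blast
  then show "A \<in> near PP (Sn n)"
  proof cases
    case 1
    have four: "A \<in> {{}, Sn n, UNIV - Sn n, UNIV}" using Y_preimage 1 by simp
    have "A \<in> sets PP"
    proof -
      from four consider "A = {}" | "A = Sn n" | "A = UNIV - Sn n" | "A = UNIV" by blast
      then show ?thesis
        using Sn_sets[of n] sets.compl_sets[OF Sn_sets[of n]] sets.top[of PP] by cases simp_all
    qed
    then show ?thesis by (rule nearI[OF _ four]) simp
  next
    case 2
    then show ?thesis by (intro nearI[of _ _ "{}"]) auto
  qed
qed

lemma sets_BB_near: "sets (BB n) \<subseteq> near PP (Sn n)"
  unfolding sets_BB by (rule sigma_near[OF space_PP gen_near Sn_sets])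

lemma sets_BB_sub: "sets (BB n) \<subseteq> sets PP"
  using sets_BB_near[of n] unfolding near_def by blast

lemma Sn_BB: "Sn n \<in> sets (BB n)"
proof -
  have "Y n -` {True} \<inter> space PP = Sn n" by (simp add: Y_def Sn_def vimage_def)
  then have "Sn n \<in> gen n" unfolding gen_def by blast
  then show ?thesis unfolding sets_BB by (rule sigma_sets.Basic)
qed

lemma subalg_BB: "subalgebra PP (BB n)"
  unfolding subalgebra_def using sets_BB_sub by simp

lemma sfs_BB: "sigma_finite_subalgebra PP (BB n)"
proof -
  interpret prob_space PP by (rule PP_prob)
  interpret finite_measure_subalgebra PP "BB n"
    by unfold_locales (rule subalg_BB)
  show ?thesis by (rule sigma_finite_subalgebra_axioms)
qed

lemma bound_A:
  fixes a d \<delta> u e :: real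
  assumes "0 < \<delta>" "\<bar>a\<bar> \<le> u" "\<bar>d\<bar> \<le> u * e" "\<delta> \<le> e"
  shows "\<bar>(a+d)/(1/2+\<delta>) - a/(1/2)\<bar> \<le> 6 * u * e"
proof -
  have u0: "0 \<le> u" using assms(2) by linarith
  have eq: "(a+d)/(1/2+\<delta>) - a/(1/2) = (d - 2*a*\<delta>)/(1/2+\<delta>)" using assms(1) by (simp add: field_simps)
  have "\<bar>d - 2*a*\<delta>\<bar> \<le> \<bar>d\<bar> + 2*\<bar>a\<bar>*\<delta>" using abs_triangle_ineq4[of d "2*a*\<delta>"] assms(1) by (simp add: abs_mult)
  also have "\<dots> \<le> u*e + 2*u*e" using assms u0 by (smt (verit, ccfv_SIG) mult_left_mono mult_mono)
  finally have n: "\<bar>d - 2*a*\<delta>\<bar> \<le> 3*u*e" by (simp add: mult_ac)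
  have "\<bar>(d - 2*a*\<delta>)/(1/2+\<delta>)\<bar> = \<bar>d - 2*a*\<delta>\<bar> / (1/2+\<delta>)" using assms(1) by (simp add: abs_divide)
  also have "\<dots> \<le> \<bar>d - 2*a*\<delta>\<bar> / (1/2)" using assms(1) by (intro divide_left_mono) auto
  also have "\<dots> \<le> 6*u*e" using n by (simp add: mult_ac)
  finally show ?thesis using eq by simp
qed

lemma bound_D:
  fixes a c d \<delta> u e :: real
  assumes "0 < \<delta>" "\<bar>a\<bar> \<le> u" "\<bar>c\<bar> \<le> u" "\<bar>d\<bar> \<le> u * e" "e \<le> 1"
  shows "\<bar>(a+d)/(1/2+\<delta>) - (d+c)/(1/2)\<bar> \<le> 8 * u"
proof -
  have u0: "0 \<le> u" using assms(2) by linarith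
  have d: "\<bar>d\<bar> \<le> u" using assms(4,5) u0 by (smt (verit) mult_left_le)
  have "\<bar>(a+d)/(1/2+\<delta>)\<bar> = \<bar>a+d\<bar>/(1/2+\<delta>)" using assms(1) by (simp add: abs_divide)
  also have "\<dots> \<le> \<bar>a+d\<bar>/(1/2)" using assms(1) by (intro divide_left_mono) auto
  also have "\<dots> \<le> 4*u" using assms(2) d by simp
  finally have 1: "\<bar>(a+d)/(1/2+\<delta>)\<bar> \<le> 4*u" .
  have 2: "\<bar>(d+c)/(1/2)\<bar> \<le> 4*u" using assms(3) d by simp
  show ?thesis using 1 2 by linarith
qed

lemma bound_C:
  fixes c d \<delta> u e :: real
  assumes "0 < \<delta>" "\<delta> \<le> 1/4" "\<bar>c\<bar> \<le> u" "\<bar>d\<bar> \<le> u * e" "\<delta> \<le> e"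
  shows "\<bar>c/(1/2-\<delta>) - (d+c)/(1/2)\<bar> \<le> 16 * u * e"
proof -
  have u0: "0 \<le> u" using assms(3) by linarith
  have e0: "0 \<le> e" using assms by linarith
  have eq: "c/(1/2-\<delta>) - (d+c)/(1/2) = (2*c*\<delta> - d + 2*d*\<delta>)/(1/2-\<delta>)" using assms(1,2) by (simp add: field_simps)
  have t1: "\<bar>2*c*\<delta>\<bar> \<le> 2*u*e" using assms u0 by (simp add: abs_mult) (smt (verit) mult_mono)
  have t2: "\<bar>2*d*\<delta>\<bar> \<le> u*e" using assms u0 e0
  proof -
    have "\<bar>2*d*\<delta>\<bar> = \<bar>d\<bar> * (2*\<delta>)" using assms(1) by (simp add: abs_mult)
    also have "\<dots> \<le> (u*e) * 1" using assms u0 e0 by (intro mult_mono) auto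
    finally show ?thesis by simp
  qed
  have n: "\<bar>2*c*\<delta> - d + 2*d*\<delta>\<bar> \<le> 4*u*e" using t1 t2 assms(4) by linarith
  have "\<bar>(2*c*\<delta> - d + 2*d*\<delta>)/(1/2-\<delta>)\<bar> = \<bar>2*c*\<delta> - d + 2*d*\<delta>\<bar>/(1/2-\<delta>)" using assms(1,2) by (simp add: abs_divide)
  also have "\<dots> \<le> \<bar>2*c*\<delta> - d + 2*d*\<delta>\<bar>/(1/4)" using assms(1,2) by (intro divide_left_mono) auto
  also have "\<dots> \<le> 16*u*e" using n by (simp add: mult_ac)
  finally show ?thesis using eq by simp
qed

lemma total_bound:
  fixes a c d \<delta> u e p :: real
  assumes p: "p > 1" and "0 < \<delta>" "\<delta> \<le> 1/4" "\<bar>a\<bar> \<le> u" "\<bar>c\<bar> \<le> u" "\<bar>d\<bar> \<le> u * e" "\<delta> \<le> e" "e \<le> 1"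
  shows "1/2 * \<bar>(a+d)/(1/2+\<delta>) - a/(1/2)\<bar> powr p + \<delta> * \<bar>(a+d)/(1/2+\<delta>) - (d+c)/(1/2)\<bar> powr p
           + (1/2-\<delta>) * \<bar>c/(1/2-\<delta>) - (d+c)/(1/2)\<bar> powr p
         \<le> 20 powr p * u powr p * (e powr p + \<delta>)"
proof -
  have u0: "0 \<le> u" using assms(4) by linarith
  have e0: "0 \<le> e" using assms by linarith
  have A: "\<bar>(a+d)/(1/2+\<delta>) - a/(1/2)\<bar> \<le> 20 * u * e"
    using bound_A[of \<delta> a u d e] assms u0 e0 by (smt (verit) mult_nonneg_nonneg mult_right_mono)
  have D: "\<bar>(a+d)/(1/2+\<delta>) - (d+c)/(1/2)\<bar> \<le> 20 * u"
    using bound_D[of \<delta> a u c d e] assms u0 by linarith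
  have C: "\<bar>c/(1/2-\<delta>) - (d+c)/(1/2)\<bar> \<le> 20 * u * e"
    using bound_C[of \<delta> c u d e] assms u0 e0 by (smt (verit) mult_nonneg_nonneg mult_right_mono)
  have p0: "0 \<le> p" using p by simp
  have eA: "\<bar>(a+d)/(1/2+\<delta>) - a/(1/2)\<bar> powr p \<le> 20 powr p * u powr p * e powr p"
  proof -
    have "\<bar>(a+d)/(1/2+\<delta>) - a/(1/2)\<bar> powr p \<le> (20 * u * e) powr p" by (rule powr_mono2[OF p0 abs_ge_zero A])
    also have "\<dots> = 20 powr p * u powr p * e powr p" using u0 e0 by (simp add: powr_mult)
    finally show ?thesis .
  qed
  have eC: "\<bar>c/(1/2-\<delta>) - (d+c)/(1/2)\<bar> powr p \<le> 20 powr p * u powr p * e powr p"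
  proof -
    have "\<bar>c/(1/2-\<delta>) - (d+c)/(1/2)\<bar> powr p \<le> (20 * u * e) powr p" by (rule powr_mono2[OF p0 abs_ge_zero C])
    also have "\<dots> = 20 powr p * u powr p * e powr p" using u0 e0 by (simp add: powr_mult)
    finally show ?thesis .
  qed
  have eD: "\<bar>(a+d)/(1/2+\<delta>) - (d+c)/(1/2)\<bar> powr p \<le> 20 powr p * u powr p"
  proof -
    have "\<bar>(a+d)/(1/2+\<delta>) - (d+c)/(1/2)\<bar> powr p \<le> (20 * u) powr p" by (rule powr_mono2[OF p0 abs_ge_zero D])
    also have "\<dots> = 20 powr p * u powr p" using u0 by (simp add: powr_mult)
    finally show ?thesis .
  qed
  define K where "K = 20 powr p * u powr p"
  have K0: "0 \<le> K" unfolding K_def by simp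
  have E0: "0 \<le> e powr p" by simp
  have "1/2 * \<bar>(a+d)/(1/2+\<delta>) - a/(1/2)\<bar> powr p \<le> 1/2 * (K * e powr p)"
    using eA unfolding K_def by simp
  moreover have "\<delta> * \<bar>(a+d)/(1/2+\<delta>) - (d+c)/(1/2)\<bar> powr p \<le> \<delta> * K"
    using eD assms(2) unfolding K_def by (intro mult_left_mono) auto
  moreover have "(1/2-\<delta>) * \<bar>c/(1/2-\<delta>) - (d+c)/(1/2)\<bar> powr p \<le> (1/2-\<delta>) * (K * e powr p)"
    using eC assms(3) unfolding K_def by (intro mult_left_mono) auto
  moreover have "1/2 * (K * e powr p) + \<delta> * K + (1/2-\<delta>) * (K * e powr p) \<le> K * (e powr p + \<delta>)"
    using K0 E0 assms(2) by (simp add: algebra_simps)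
  ultimately show ?thesis unfolding K_def by linarith
qed

lemma (in prob_space) Lp_integrable:
  fixes f :: "'a \<Rightarrow> real"
  assumes p: "p > 1" and fm: "f \<in> borel_measurable M" and fi: "integrable M (\<lambda>x. \<bar>f x\<bar> powr p)"
  shows "integrable M f"
proof (rule Bochner_Integration.integrable_bound[where f="\<lambda>x. 1 + \<bar>f x\<bar> powr p"])
  show "integrable M (\<lambda>x. 1 + \<bar>f x\<bar> powr p)" using fi by simp
  show "f \<in> borel_measurable M" by (rule fm)
  show "AE x in M. norm (f x) \<le> norm (1 + \<bar>f x\<bar> powr p)"
  proof (rule AE_I2)
    fix x
    have "\<bar>f x\<bar> \<le> 1 + \<bar>f x\<bar> powr p"
    proof (cases "\<bar>f x\<bar> \<le> 1")
      case True then show ?thesis by (smt (verit) powr_ge_zero)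
    next
      case False
      then have "\<bar>f x\<bar> powr 1 \<le> \<bar>f x\<bar> powr p" using p by (intro powr_mono) auto
      then show ?thesis using False by simp
    qed
    then show "norm (f x) \<le> norm (1 + \<bar>f x\<bar> powr p)" by simp
  qed
qed

lemma (in prob_space) holder_ind:
  fixes f :: "'a \<Rightarrow> real"
  assumes p: "p > 1" and fm: "f \<in> borel_measurable M" and fi: "integrable M (\<lambda>x. \<bar>f x\<bar> powr p)"
    and A: "A \<in> sets M" and mA: "measure M A > 0"
  shows "\<bar>\<integral>x. indicator A x * f x \<partial>M\<bar> \<le> (\<integral>x. \<bar>f x\<bar> powr p \<partial>M) powr (1/p) * measure M A powr (1 - 1/p)"
proof -
  define F where "F = (\<integral>x. \<bar>f x\<bar> powr p \<partial>M)"
  define m where "m = measure M A"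
  define q where "q = p / (p - 1)"
  have q1: "q > 1" using p unfolding q_def by (simp add: field_simps)
  have pq: "1/p + 1/q = 1" using p unfolding q_def by (simp add: field_simps)
  have iq: "1/q = 1 - 1/p" using pq by simp
  have fint: "integrable M f" by (rule Lp_integrable[OF p fm fi])
  have iA: "integrable M (\<lambda>x. indicator A x * f x)"
    using integrable_mult_indicator[OF A fint] by simp
  have iAabs: "integrable M (\<lambda>x. indicator A x * \<bar>f x\<bar>)"
    using integrable_mult_indicator[OF A integrable_abs[OF fint]] by simp
  have le1: "\<bar>\<integral>x. indicator A x * f x \<partial>M\<bar> \<le> (\<integral>x. indicator A x * \<bar>f x\<bar> \<partial>M)"
  proof -
    have "\<bar>\<integral>x. indicator A x * f x \<partial>M\<bar> \<le> (\<integral>x. norm (indicator A x * f x) \<partial>M)"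
      using integral_norm_bound[of M "\<lambda>x. indicator A x * f x"] by simp
    also have "\<dots> = (\<integral>x. indicator A x * \<bar>f x\<bar> \<partial>M)"
      by (intro Bochner_Integration.integral_cong) (auto simp: abs_mult split: split_indicator)
    finally show ?thesis .
  qed
  have F0: "F \<ge> 0" unfolding F_def by simp
  show ?thesis
  proof (cases "F = 0")
    case True
    have "AE x in M. \<bar>f x\<bar> powr p = 0"
      using True fi unfolding F_def by (subst integral_nonneg_eq_0_iff_AE[symmetric]) auto
    then have "AE x in M. indicator A x * \<bar>f x\<bar> = 0" by (rule AE_mp) (auto intro!: AE_I2)
    then have "(\<integral>x. indicator A x * \<bar>f x\<bar> \<partial>M) = 0" by (rule integral_eq_zero_AE)
    then show ?thesis using le1 by simp
  next
    case False
    then have Fp: "F > 0" using F0 by simp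
    define \<alpha> where "\<alpha> = F powr (1/p)"
    define \<beta> where "\<beta> = m powr (1/q)"
    have ap: "\<alpha> > 0" unfolding \<alpha>_def using Fp by simp
    have bp: "\<beta> > 0" unfolding \<beta>_def using mA m_def by simp
    have ap_p: "\<alpha> powr p = F" unfolding \<alpha>_def using p Fp by (simp add: powr_powr)
    have bq_q: "\<beta> powr q = m" unfolding \<beta>_def using q1 mA m_def by (simp add: powr_powr)
    have pt: "indicator A x * \<bar>f x\<bar> \<le> \<alpha> * \<beta> * (\<bar>f x\<bar> powr p / (p * F) + indicator A x / (q * m))" for x
    proof -
      have Y: "(\<bar>f x\<bar> / \<alpha>) * (indicator A x / \<beta>) \<le> (\<bar>f x\<bar> / \<alpha>) powr p / p + (indicator A x / \<beta>) powr q / q"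
        using ap bp p q1 pq by (intro Youngs_inequality) auto
      have e1: "(\<bar>f x\<bar> / \<alpha>) powr p = \<bar>f x\<bar> powr p / F" using ap_p by (simp add: powr_divide)
      have e2: "(indicator A x / \<beta>) powr q = indicator A x / m"
        using bq_q q1 by (cases "x \<in> A") (simp_all add: powr_divide)
      have "indicator A x * \<bar>f x\<bar> = \<alpha> * \<beta> * ((\<bar>f x\<bar> / \<alpha>) * (indicator A x / \<beta>))"
        using ap bp by (simp add: field_simps)
      also have "\<dots> \<le> \<alpha> * \<beta> * ((\<bar>f x\<bar> / \<alpha>) powr p / p + (indicator A x / \<beta>) powr q / q)"
        using Y ap bp by (intro mult_left_mono) auto
      also have "\<dots> = \<alpha> * \<beta> * (\<bar>f x\<bar> powr p / (p * F) + indicator A x / (q * m))"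
        by (simp add: e1 e2 mult.commute)
      finally show ?thesis .
    qed
    have iind: "integrable M (indicator A :: 'a \<Rightarrow> real)"
    proof (rule integrable_real_indicator[OF A])
      have "emeasure M A \<noteq> top" by (rule emeasure_finite)
      then show "emeasure M A < \<infinity>" using top.not_eq_extremum infinity_ennreal_def by metis
    qed
    have isum: "integrable M (\<lambda>x. \<bar>f x\<bar> powr p / (p * F) + indicator A x / (q * m))"
      by (rule Bochner_Integration.integrable_add[OF integrable_divide[OF fi] integrable_divide[OF iind]])
    have "(\<integral>x. indicator A x * \<bar>f x\<bar> \<partial>M) \<le> (\<integral>x. \<alpha> * \<beta> * (\<bar>f x\<bar> powr p / (p * F) + indicator A x / (q * m)) \<partial>M)"
      using iAabs isum by (intro integral_mono pt) auto
    also have "\<dots> = \<alpha> * \<beta> * ((\<integral>x. \<bar>f x\<bar> powr p \<partial>M) / (p * F) + measure M A / (q * m))"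
      using fi A iind by (simp add: Bochner_Integration.integral_add integrable_divide)
    also have "\<dots> = \<alpha> * \<beta>"
      using Fp mA pq unfolding F_def m_def by simp
    finally show ?thesis using le1 iq unfolding \<alpha>_def \<beta>_def F_def m_def by simp
  qed
qed


lemma PP_measure_compl: "A \<in> sets PP \<Longrightarrow> measure PP (UNIV - A) = 1 - measure PP A"
  using prob_space.prob_compl[OF PP_prob, of A] by simp

lemma fin_PP: "emeasure PP A < \<infinity>"
proof -
  interpret prob_space PP by (rule PP_prob)
  have "emeasure PP A \<noteq> top" by (rule emeasure_finite)
  then show ?thesis using top.not_eq_extremum infinity_ennreal_def by metis
qed

lemma int_ind_const: "A \<in> sets PP \<Longrightarrow> (\<integral>x. indicator A x * c \<partial>PP) = c * measure PP A"
proof -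
  assume A: "A \<in> sets PP"
  have "(\<integral>x. indicator A x * c \<partial>PP) = (\<integral>x. indicator A x \<partial>PP) * c"
    by (rule integral_mult_left_zero)
  also have "\<dots> = c * measure PP A" using A by simp
  finally show ?thesis .
qed

lemma split_int:
  fixes f :: "(nat \<Rightarrow> bool) \<Rightarrow> real"
  assumes fi: "integrable PP f" and S: "S \<in> sets PP"
  shows "(\<integral>x. f x \<partial>PP) = (\<integral>x. indicator S x * f x \<partial>PP) + (\<integral>x. indicator (UNIV - S) x * f x \<partial>PP)"
proof -
  have i1: "integrable PP (\<lambda>x. indicator S x * f x)" using integrable_mult_indicator[OF S fi] by simp
  have S': "UNIV - S \<in> sets PP" using sets.compl_sets[OF S] by simp
  have i2: "integrable PP (\<lambda>x. indicator (UNIV - S) x * f x)" using integrable_mult_indicator[OF S' fi] by simp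
  have "(\<integral>x. f x \<partial>PP) = (\<integral>x. indicator S x * f x + indicator (UNIV - S) x * f x \<partial>PP)"
    by (intro Bochner_Integration.integral_cong) (auto split: split_indicator)
  also have "\<dots> = (\<integral>x. indicator S x * f x \<partial>PP) + (\<integral>x. indicator (UNIV - S) x * f x \<partial>PP)"
    by (rule Bochner_Integration.integral_add[OF i1 i2])
  finally show ?thesis .
qed

lemma cond_exp_formula:
  assumes fi: "integrable PP f" and m0: "0 < measure PP (Sn n)" and m1: "measure PP (Sn n) < 1"
  shows "AE x in PP. real_cond_exp PP (BB n) f x =
     (\<integral>x. indicator (Sn n) x * f x \<partial>PP) / measure PP (Sn n) * indicator (Sn n) x
     + (\<integral>x. indicator (UNIV - Sn n) x * f x \<partial>PP) / measure PP (UNIV - Sn n) * indicator (UNIV - Sn n) x"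
proof -
  define S where "S = Sn n"
  define \<alpha> where "\<alpha> = (\<integral>x. indicator S x * f x \<partial>PP) / measure PP S"
  define \<beta> where "\<beta> = (\<integral>x. indicator (UNIV - S) x * f x \<partial>PP) / measure PP (UNIV - S)"
  define g where "g = (\<lambda>x. \<alpha> * indicator S x + \<beta> * indicator (UNIV - S) x :: real)"
  have SP: "S \<in> sets PP" unfolding S_def by (rule Sn_sets)
  have SP': "UNIV - S \<in> sets PP" using sets.compl_sets[OF SP] by simp
  have SB: "S \<in> sets (BB n)" unfolding S_def by (rule Sn_BB)
  have SB': "UNIV - S \<in> sets (BB n)" using sets.compl_sets[OF SB] by simp
  have mS: "measure PP S > 0" using m0 S_def by simp
  have mS': "measure PP (UNIV - S) > 0" using m1 PP_measure_compl[OF SP] S_def by simp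
  have gB: "g \<in> borel_measurable (BB n)"
    unfolding g_def using SB SB' by measurable
  have gP: "g \<in> borel_measurable PP"
    unfolding g_def using SP SP' by measurable
  have gi: "integrable PP g"
    unfolding g_def using SP SP' fin_PP
    by (intro Bochner_Integration.integrable_add integrable_mult_right integrable_real_indicator) auto
  have intS: "(\<integral>x. indicator S x * g x \<partial>PP) = (\<integral>x. indicator S x * f x \<partial>PP)"
  proof -
    have "(\<integral>x. indicator S x * g x \<partial>PP) = (\<integral>x. indicator S x * \<alpha> \<partial>PP)"
      unfolding g_def by (intro Bochner_Integration.integral_cong) (auto split: split_indicator)
    also have "\<dots> = \<alpha> * measure PP S" by (rule int_ind_const[OF SP])
    also have "\<dots> = (\<integral>x. indicator S x * f x \<partial>PP)" unfolding \<alpha>_def using mS by simp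
    finally show ?thesis .
  qed
  have intS': "(\<integral>x. indicator (UNIV - S) x * g x \<partial>PP) = (\<integral>x. indicator (UNIV - S) x * f x \<partial>PP)"
  proof -
    have "(\<integral>x. indicator (UNIV - S) x * g x \<partial>PP) = (\<integral>x. indicator (UNIV - S) x * \<beta> \<partial>PP)"
      unfolding g_def by (intro Bochner_Integration.integral_cong) (auto split: split_indicator)
    also have "\<dots> = \<beta> * measure PP (UNIV - S)" by (rule int_ind_const[OF SP'])
    also have "\<dots> = (\<integral>x. indicator (UNIV - S) x * f x \<partial>PP)" unfolding \<beta>_def using mS' by simp
    finally show ?thesis .
  qed
  have four: "(\<integral>x. indicator T x * f x \<partial>PP) = (\<integral>x. indicator T x * g x \<partial>PP)"
    if T: "T \<in> {{}, S, UNIV - S, UNIV}" for T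
  proof -
    from T consider "T = {}" | "T = S" | "T = UNIV - S" | "T = UNIV" by blast
    then show ?thesis
    proof cases
      case 1 then show ?thesis by simp
    next
      case 2 then show ?thesis using intS by simp
    next
      case 3 then show ?thesis using intS' by simp
    next
      case 4
      have "(\<integral>x. f x \<partial>PP) = (\<integral>x. g x \<partial>PP)"
        using split_int[OF fi SP] split_int[OF gi SP] intS intS' by simp
      then show ?thesis using 4 by simp
    qed
  qed
  have "AE x in PP. real_cond_exp PP (BB n) f x = g x"
  proof (rule sigma_finite_subalgebra.real_cond_exp_charact[OF sfs_BB _ fi gi gB])
    fix A assume A: "A \<in> sets (BB n)"
    then have "A \<in> near PP S" using sets_BB_near S_def by blast
    then show "(\<integral>x\<in>A. f x \<partial>PP) = (\<integral>x\<in>A. g x \<partial>PP)"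
    proof (rule nearE)
      fix T assume AP: "A \<in> sets PP" and T: "T \<in> {{}, S, UNIV - S, UNIV}" and nl: "(A - T) \<union> (T - A) \<in> null_sets PP"
      have TP: "T \<in> sets PP"
      proof -
        from T consider "T = {}" | "T = S" | "T = UNIV - S" | "T = UNIV" by blast
        then show ?thesis using SP SP' sets.top[of PP] by cases simp_all
      qed
      have "(\<integral>x\<in>A. f x \<partial>PP) = (\<integral>x\<in>T. f x \<partial>PP)" by (rule set_integral_null_delta[OF fi AP TP nl])
      also have "\<dots> = (\<integral>x. indicator T x * f x \<partial>PP)" by (simp add: set_lebesgue_integral_def)
      also have "\<dots> = (\<integral>x. indicator T x * g x \<partial>PP)" by (rule four[OF T])
      also have "\<dots> = (\<integral>x\<in>T. g x \<partial>PP)" by (simp add: set_lebesgue_integral_def)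
      also have "\<dots> = (\<integral>x\<in>A. g x \<partial>PP)" by (rule set_integral_null_delta[OF gi AP TP nl, symmetric])
      finally show ?thesis .
    qed
  qed
  then show ?thesis unfolding g_def \<alpha>_def \<beta>_def S_def .
qed

definition A0 :: "(nat \<Rightarrow> bool) set" where "A0 = {\<omega>. \<omega> 0}"
definition Dn :: "nat \<Rightarrow> (nat \<Rightarrow> bool) set" where "Dn n = {\<omega>. \<not> \<omega> 0 \<and> \<omega> n}"
definition Cn :: "nat \<Rightarrow> (nat \<Rightarrow> bool) set" where "Cn n = {\<omega>. \<not> \<omega> 0 \<and> \<not> \<omega> n}"

lemma A0_sets[measurable]: "A0 \<in> sets PP" unfolding A0_def by (rule sets_coord)
lemma Dn_sets[measurable]: "Dn n \<in> sets PP"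
proof -
  have "Dn n = (UNIV - {\<omega>. \<omega> 0}) \<inter> {\<omega>. \<omega> n}" unfolding Dn_def by (simp add: set_eq_iff)
  then show ?thesis using sets_coord[of 0] sets_coord[of n] sets.compl_sets[OF sets_coord[of 0]] by simp
qed
lemma Cn_sets[measurable]: "Cn n \<in> sets PP"
proof -
  have "Cn n = (UNIV - {\<omega>. \<omega> 0}) \<inter> (UNIV - {\<omega>. \<omega> n})" unfolding Cn_def by (simp add: set_eq_iff)
  then show ?thesis using sets.compl_sets[OF sets_coord[of 0]] sets.compl_sets[OF sets_coord[of n]] by simp
qed

lemma Sn0: "Sn 0 = A0" unfolding Sn_def A0_def by simp

lemma ind_Sn: "indicator (Sn n) x = (indicator A0 x + indicator (Dn n) x :: real)"
  unfolding Sn_def A0_def Dn_def by (simp add: indicator_def)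
lemma ind_cSn: "indicator (UNIV - Sn n) x = (indicator (Cn n) x :: real)"
  unfolding Sn_def Cn_def by (simp add: indicator_def)
lemma ind_cA0: "indicator (UNIV - A0) x = (indicator (Dn n) x + indicator (Cn n) x :: real)"
  unfolding A0_def Cn_def Dn_def by (simp add: indicator_def)
lemma ind_part: "indicator A0 x + indicator (Dn n) x + indicator (Cn n) x = (1::real)"
  unfolding A0_def Cn_def Dn_def by (simp add: indicator_def)

lemma pmf_bern: "pmf (bernoulli_pmf (bern_param i)) a = (if a then bern_param i else 1 - bern_param i)"
  using bern_param_01[of i] by (cases a) auto

lemma measure_PP_two:
  assumes "i \<noteq> j"
  shows "measure PP {\<omega>. \<omega> i = a \<and> \<omega> j = b} = pmf (bernoulli_pmf (bern_param i)) a * pmf (bernoulli_pmf (bern_param j)) b"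
  using emeasure_PP_two[OF assms, of a b]
  by (simp add: measure_def enn2real_mult emeasure_pmf_single del: pmf_bernoulli_True pmf_bernoulli_False)

lemma measure_PP_one:
  shows "measure PP {\<omega>. \<omega> i = a} = pmf (bernoulli_pmf (bern_param i)) a"
  using emeasure_PP_one[of i a]
  by (simp add: measure_def emeasure_pmf_single del: pmf_bernoulli_True pmf_bernoulli_False)

lemma measure_A0: "measure PP A0 = 1/2"
proof -
  have "A0 = {\<omega>. \<omega> 0 = True}" unfolding A0_def by simp
  then show ?thesis using measure_PP_one[of 0 True] unfolding pmf_bern by (simp add: bern_param_def)
qed

lemma measure_Dn: "n \<ge> 1 \<Longrightarrow> measure PP (Dn n) = 1/2 * (1/2^n)"
proof -
  assume n: "n \<ge> 1"
  have "Dn n = {\<omega>. \<omega> 0 = False \<and> \<omega> n = True}" unfolding Dn_def by simp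
  then show ?thesis using measure_PP_two[of 0 n False True] n unfolding pmf_bern by (simp add: bern_param_def)
qed

lemma measure_Cn: "n \<ge> 1 \<Longrightarrow> measure PP (Cn n) = 1/2 * (1 - 1/2^n)"
proof -
  assume n: "n \<ge> 1"
  have "Cn n = {\<omega>. \<omega> 0 = False \<and> \<omega> n = False}" unfolding Cn_def by simp
  then show ?thesis using measure_PP_two[of 0 n False False] n unfolding pmf_bern by (simp add: bern_param_def)
qed


lemma Sn_split: "n \<ge> 1 \<Longrightarrow> Sn n = A0 \<union> Dn n"
  unfolding Sn_def A0_def Dn_def by (auto simp: set_eq_iff)
lemma cSn: "UNIV - Sn n = Cn n"
  unfolding Sn_def Cn_def by (auto simp: set_eq_iff)

lemma int_split2:
  fixes f :: "(nat \<Rightarrow> bool) \<Rightarrow> real"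
  assumes fi: "integrable PP f" and A: "A \<in> sets PP" and B: "B \<in> sets PP"
  shows "(\<integral>x. (indicator A x + indicator B x) * f x \<partial>PP) = (\<integral>x. indicator A x * f x \<partial>PP) + (\<integral>x. indicator B x * f x \<partial>PP)"
proof -
  have i1: "integrable PP (\<lambda>x. indicator A x * f x)" using integrable_mult_indicator[OF A fi] by simp
  have i2: "integrable PP (\<lambda>x. indicator B x * f x)" using integrable_mult_indicator[OF B fi] by simp
  have "(\<integral>x. (indicator A x + indicator B x) * f x \<partial>PP) = (\<integral>x. indicator A x * f x + indicator B x * f x \<partial>PP)"
    by (simp add: distrib_right)
  also have "\<dots> = (\<integral>x. indicator A x * f x \<partial>PP) + (\<integral>x. indicator B x * f x \<partial>PP)"
    by (rule Bochner_Integration.integral_add[OF i1 i2])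
  finally show ?thesis .
qed

lemma main_bound:
  fixes f :: "(nat \<Rightarrow> bool) \<Rightarrow> real" and p :: real
  assumes p: "p > 1" and n: "n \<ge> 1" and Lf: "Lp_fun p f"
  shows "(\<integral>x. \<bar>real_cond_exp PP (BB n) f x - real_cond_exp PP (BB 0) f x\<bar> powr p \<partial>PP)
           \<le> (2 * 20 powr p) * 2 powr (- real n * min (p - 1) 1) * (\<integral>x. \<bar>f x\<bar> powr p \<partial>PP)"
proof -
  interpret prob_space PP by (rule PP_prob)
  have fm: "f \<in> borel_measurable PP" and fpi: "integrable PP (\<lambda>x. \<bar>f x\<bar> powr p)"
    using Lf unfolding Lp_fun_def by auto
  have fi: "integrable PP f" by (rule Lp_integrable[OF p fm fpi])
  define \<delta> :: real where "\<delta> = 1/2 * (1/2^n)"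
  have d0: "\<delta> > 0" unfolding \<delta>_def by simp
  have "(1::real)/2^n \<le> 1/2^1" using n by (intro divide_left_mono power_increasing) auto
  then have d4: "\<delta> \<le> 1/4" unfolding \<delta>_def by simp
  have mA0: "measure PP A0 = 1/2" by (rule measure_A0)
  have mD: "measure PP (Dn n) = \<delta>" unfolding \<delta>_def using measure_Dn[OF n] .
  have mC: "measure PP (Cn n) = 1/2 - \<delta>" unfolding \<delta>_def using measure_Cn[OF n] by (simp add: algebra_simps)
  have mSn: "measure PP (Sn n) = 1/2 + \<delta>"
  proof -
    have disj: "A0 \<inter> Dn n = {}" unfolding A0_def Dn_def by auto
    have "measure PP (Sn n) = measure PP A0 + measure PP (Dn n)"
      unfolding Sn_split[OF n] by (rule finite_measure_Union[OF A0_sets Dn_sets disj])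
    then show ?thesis using mA0 mD by simp
  qed
  have mcSn: "measure PP (UNIV - Sn n) = 1/2 - \<delta>" using mC cSn by simp
  have mcS0: "measure PP (UNIV - Sn 0) = 1/2" using PP_measure_compl[OF A0_sets] mA0 Sn0 by simp
  define a where "a = (\<integral>x. indicator A0 x * f x \<partial>PP)"
  define d where "d = (\<integral>x. indicator (Dn n) x * f x \<partial>PP)"
  define c where "c = (\<integral>x. indicator (Cn n) x * f x \<partial>PP)"
  have iSn: "(\<integral>x. indicator (Sn n) x * f x \<partial>PP) = a + d"
    unfolding ind_Sn a_def d_def by (rule int_split2[OF fi A0_sets Dn_sets])
  have icSn: "(\<integral>x. indicator (UNIV - Sn n) x * f x \<partial>PP) = c"
    unfolding ind_cSn c_def ..
  have iS0: "(\<integral>x. indicator (Sn 0) x * f x \<partial>PP) = a" unfolding Sn0 a_def ..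
  have icS0: "(\<integral>x. indicator (UNIV - Sn 0) x * f x \<partial>PP) = d + c"
    unfolding Sn0 ind_cA0[of _ n] d_def c_def by (rule int_split2[OF fi Dn_sets Cn_sets])
  have AEn: "AE x in PP. real_cond_exp PP (BB n) f x =
      (a + d) / (1/2 + \<delta>) * indicator (Sn n) x + c / (1/2 - \<delta>) * indicator (UNIV - Sn n) x"
    using cond_exp_formula[OF fi, of n] mSn mcSn d0 d4 iSn icSn by simp
  have AE0: "AE x in PP. real_cond_exp PP (BB 0) f x =
      a / (1/2) * indicator (Sn 0) x + (d + c) / (1/2) * indicator (UNIV - Sn 0) x"
    using cond_exp_formula[OF fi, of 0] mA0 mcS0[unfolded Sn0] iS0[unfolded Sn0] icS0[unfolded Sn0] unfolding Sn0 by simp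
  define KA where "KA = \<bar>(a+d)/(1/2+\<delta>) - a/(1/2)\<bar> powr p"
  define KD where "KD = \<bar>(a+d)/(1/2+\<delta>) - (d+c)/(1/2)\<bar> powr p"
  define KC where "KC = \<bar>c/(1/2-\<delta>) - (d+c)/(1/2)\<bar> powr p"
  define h where "h = (\<lambda>x. indicator A0 x * KA + indicator (Dn n) x * KD + indicator (Cn n) x * KC :: real)"
  have pw: "\<bar>((a + d) / (1/2 + \<delta>) * indicator (Sn n) x + c / (1/2 - \<delta>) * indicator (UNIV - Sn n) x)
            - (a / (1/2) * indicator (Sn 0) x + (d + c) / (1/2) * indicator (UNIV - Sn 0) x)\<bar> powr p = h x" for x
  proof (cases "x 0")
    case True
    then show ?thesis unfolding h_def KA_def Sn_def A0_def Dn_def Cn_def by (simp add: indicator_def)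
  next
    case False
    show ?thesis
    proof (cases "x n")
      case True
      then show ?thesis using False n unfolding h_def KD_def Sn_def A0_def Dn_def Cn_def by (simp add: indicator_def)
    next
      case F: False
      then show ?thesis using False n unfolding h_def KC_def Sn_def A0_def Dn_def Cn_def by (simp add: indicator_def)
    qed
  qed
  have "(\<integral>x. \<bar>real_cond_exp PP (BB n) f x - real_cond_exp PP (BB 0) f x\<bar> powr p \<partial>PP) = (\<integral>x. h x \<partial>PP)"
  proof (rule integral_cong_AE)
    show "(\<lambda>x. \<bar>real_cond_exp PP (BB n) f x - real_cond_exp PP (BB 0) f x\<bar> powr p) \<in> borel_measurable PP"
      by measurable
    show "h \<in> borel_measurable PP" unfolding h_def by measurable
    show "AE x in PP. \<bar>real_cond_exp PP (BB n) f x - real_cond_exp PP (BB 0) f x\<bar> powr p = h x"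
      using AEn AE0 by eventually_elim (simp only: pw)
  qed
  also have "\<dots> = KA * (1/2) + KD * \<delta> + KC * (1/2 - \<delta>)"
  proof -
    have i: "integrable PP (\<lambda>x. indicator A x * K :: real)" if "A \<in> sets PP" for A K
      using that fin_PP by (intro integrable_mult_left integrable_real_indicator) auto
    have "(\<integral>x. h x \<partial>PP) = (\<integral>x. indicator A0 x * KA \<partial>PP) + (\<integral>x. indicator (Dn n) x * KD \<partial>PP) + (\<integral>x. indicator (Cn n) x * KC \<partial>PP)"
      unfolding h_def using i[OF A0_sets] i[OF Dn_sets] i[OF Cn_sets]
      by (simp add: Bochner_Integration.integral_add)
    also have "\<dots> = KA * (1/2) + KD * \<delta> + KC * (1/2 - \<delta>)"
      using int_ind_const[OF A0_sets, of KA] int_ind_const[OF Dn_sets, of n KD] int_ind_const[OF Cn_sets, of n KC] mA0 mD mC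
      by simp
    finally show ?thesis .
  qed
  also have "\<dots> \<le> (2 * 20 powr p) * 2 powr (- real n * min (p - 1) 1) * (\<integral>x. \<bar>f x\<bar> powr p \<partial>PP)"
  proof -
    define F where "F = (\<integral>x. \<bar>f x\<bar> powr p \<partial>PP)"
    have F0: "F \<ge> 0" unfolding F_def by simp
    define u where "u = F powr (1/p)"
    define e where "e = \<delta> powr (1 - 1/p)"
    have u0: "u \<ge> 0" unfolding u_def by simp
    have ex: "0 \<le> 1 - 1/p" using p by simp
    have Ha: "\<bar>a\<bar> \<le> u"
    proof -
      have "\<bar>a\<bar> \<le> u * (1/2) powr (1 - 1/p)"
        using holder_ind[OF p fm fpi A0_sets] mA0 unfolding a_def u_def F_def by simp
      also have "\<dots> \<le> u * 1" using u0 ex by (intro mult_left_mono powr_le1) auto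
      finally show ?thesis by simp
    qed
    have Hc: "\<bar>c\<bar> \<le> u"
    proof -
      have "\<bar>c\<bar> \<le> u * (1/2 - \<delta>) powr (1 - 1/p)"
        using holder_ind[OF p fm fpi Cn_sets[of n]] mC d4 unfolding c_def u_def F_def by simp
      also have "\<dots> \<le> u * 1" using u0 ex d0 d4 by (intro mult_left_mono powr_le1) auto
      finally show ?thesis by simp
    qed
    have Hd: "\<bar>d\<bar> \<le> u * e"
      using holder_ind[OF p fm fpi Dn_sets[of n]] mD d0 unfolding d_def u_def F_def e_def by simp
    have de: "\<delta> \<le> e"
    proof -
      have "\<delta> powr 1 \<le> \<delta> powr (1 - 1/p)" using d0 d4 p by (intro powr_mono') auto
      then show ?thesis unfolding e_def using d0 by simp
    qed
    have e1: "e \<le> 1" unfolding e_def using d0 d4 ex by (intro powr_le1) auto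
    have TB: "1/2 * KA + \<delta> * KD + (1/2-\<delta>) * KC \<le> 20 powr p * u powr p * (e powr p + \<delta>)"
      unfolding KA_def KD_def KC_def by (rule total_bound[OF p d0 d4 Ha Hc Hd de e1])
    have up: "u powr p = F" unfolding u_def using p F0 by (simp add: powr_powr)
    have ep: "e powr p = \<delta> powr (p - 1)" unfolding e_def using p by (simp add: powr_powr algebra_simps)
    define m where "m = min (p - 1) 1"
    have m1: "m \<le> p - 1" "m \<le> 1" "0 \<le> m" unfolding m_def using p by auto
    have twop: "(2::real) powr (real n + 1) = 2^(n+1)" using powr_realpow[of 2 "n+1"] by (simp add: add.commute)
    have dpow: "\<delta> = 2 powr (-(real n + 1))"
    proof -
      have "(2::real) powr (-(real n + 1)) = inverse (2 powr (real n + 1))" by (rule powr_minus)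
      then show ?thesis unfolding \<delta>_def twop by (simp add: field_simps)
    qed
    have b1: "\<delta> powr (p - 1) \<le> 2 powr (- real n * m)"
    proof -
      have "\<delta> powr (p - 1) = 2 powr (-(real n + 1) * (p - 1))" unfolding dpow by (simp add: powr_powr)
      also have "\<dots> \<le> 2 powr (- real n * m)"
      proof (rule powr_mono)
        have "real n * m \<le> real n * (p - 1)" using m1 by (intro mult_left_mono) auto
        also have "\<dots> \<le> (real n + 1) * (p - 1)" using p by (intro mult_right_mono) auto
        finally show "-(real n + 1) * (p - 1) \<le> - real n * m" by (simp add: algebra_simps)
      qed simp
      finally show ?thesis .
    qed
    have b2: "\<delta> \<le> 2 powr (- real n * m)"
    proof -
      have "\<delta> = 2 powr (-(real n + 1))" by (rule dpow)
      also have "\<dots> \<le> 2 powr (- real n * m)"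
      proof (rule powr_mono)
        have "real n * m \<le> real n * 1" using m1 by (intro mult_left_mono) auto
        then show "-(real n + 1) \<le> - real n * m" by simp
      qed simp
      finally show ?thesis .
    qed
    have "KA * (1/2) + KD * \<delta> + KC * (1/2 - \<delta>) = 1/2 * KA + \<delta> * KD + (1/2-\<delta>) * KC" by (simp add: mult_ac)
    also have "\<dots> \<le> 20 powr p * F * (\<delta> powr (p - 1) + \<delta>)" using TB up ep by simp
    also have "\<dots> \<le> 20 powr p * F * (2 * 2 powr (- real n * m))"
      using b1 b2 F0 by (intro mult_left_mono) auto
    also have "\<dots> = (2 * 20 powr p) * 2 powr (- real n * min (p - 1) 1) * (\<integral>x. \<bar>f x\<bar> powr p \<partial>PP)"
      unfolding F_def m_def by (simp add: mult_ac)
    finally show ?thesis .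
  qed
  finally show ?thesis .
qed

lemma null_measure0: "A \<in> null_sets PP \<Longrightarrow> measure PP A = 0"
  by (simp add: measure_def null_setsD1)

lemma not_ult: "\<not> (\<exists>N. \<forall>n\<ge>N. sets (BB n) = sets (BB 0))"
proof
  assume "\<exists>N. \<forall>n\<ge>N. sets (BB n) = sets (BB 0)"
  then obtain N where N: "\<And>n. n \<ge> N \<Longrightarrow> sets (BB n) = sets (BB 0)" by blast
  define n where "n = Suc N"
  have n1: "n \<ge> 1" unfolding n_def by simp
  have "A0 \<in> sets (BB 0)" using Sn_BB[of 0] unfolding Sn0 .
  then have "A0 \<in> sets (BB n)" using N[of n] unfolding n_def by simp
  then have "A0 \<in> near PP (Sn n)" using sets_BB_near by blast
  then show False
  proof (rule nearE)
    fix T assume T: "T \<in> {{}, Sn n, UNIV - Sn n, UNIV}" and nl: "(A0 - T) \<union> (T - A0) \<in> null_sets PP"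
    have mD: "measure PP (Dn n) > 0" using measure_Dn[OF n1] by simp
    have "A0 \<subseteq> (A0 - T) \<union> (T - A0) \<or> Dn n \<subseteq> (A0 - T) \<union> (T - A0)"
    proof -
      from T consider "T = {}" | "T = Sn n" | "T = UNIV - Sn n" | "T = UNIV" by blast
      then show ?thesis
      proof cases
        case 1 then show ?thesis by simp
      next
        case 2 then show ?thesis unfolding Sn_def A0_def Dn_def by blast
      next
        case 3 then show ?thesis unfolding Sn_def A0_def by blast
      next
        case 4 then show ?thesis unfolding A0_def Dn_def by blast
      qed
    qed
    then show False
    proof
      assume "A0 \<subseteq> (A0 - T) \<union> (T - A0)"
      then have "A0 \<in> null_sets PP" by (rule null_sets_subset[OF nl A0_sets])
      then show False using null_measure0 measure_A0 by simp
    next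
      assume "Dn n \<subseteq> (A0 - T) \<union> (T - A0)"
      then have "Dn n \<in> null_sets PP" by (rule null_sets_subset[OF nl Dn_sets])
      then show False using null_measure0 mD by simp
    qed
  qed
qed

lemma opnorm_bound:
  fixes p :: real
  assumes p: "p > 1" and n: "n \<ge> 1"
  shows "0 \<le> cond_diff_opnorm p n \<and> cond_diff_opnorm p n \<le> ((2 * 20 powr p) * 2 powr (- real n * min (p - 1) 1)) powr (1/p)"
proof -
  define K where "K = (2 * 20 powr p) * 2 powr (- real n * min (p - 1) 1)"
  have K0: "K \<ge> 0" unfolding K_def by simp
  define Sf where "Sf = {f. Lp_fun p f \<and> (\<integral>x. \<bar>f x\<bar> powr p \<partial>PP) \<le> 1}"
  define G where "G = (\<lambda>f. (\<integral>x. \<bar>real_cond_exp PP (BB n) f x - real_cond_exp PP (BB 0) f x\<bar> powr p \<partial>PP) powr (1 / p))"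
  have opn: "cond_diff_opnorm p n = (SUP f \<in> Sf. G f)" unfolding cond_diff_opnorm_def Sf_def G_def ..
  have zS: "(\<lambda>_. 0) \<in> Sf" unfolding Sf_def Lp_fun_def using p by simp
  have bnd: "G f \<le> K powr (1/p)" if f: "f \<in> Sf" for f
  proof -
    have Lf: "Lp_fun p f" and f1: "(\<integral>x. \<bar>f x\<bar> powr p \<partial>PP) \<le> 1" using f unfolding Sf_def by auto
    have "G f \<le> (K * (\<integral>x. \<bar>f x\<bar> powr p \<partial>PP)) powr (1/p)"
      unfolding G_def K_def using p by (intro powr_mono2 main_bound[OF p n Lf]) auto
    also have "\<dots> \<le> K powr (1/p)"
      using p K0 f1 by (intro powr_mono2) (auto intro: mult_left_le)
    finally show ?thesis .
  qed
  have "cond_diff_opnorm p n \<le> K powr (1/p)" unfolding opn using zS bnd by (intro cSUP_least) auto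
  moreover have "0 \<le> cond_diff_opnorm p n"
    unfolding opn using zS bnd by (intro cSUP_upper2[of G Sf "\<lambda>_. 0"]) (auto simp: G_def bdd_above_def)
  ultimately show ?thesis unfolding K_def by simp
qed

lemma opnorm_lim:
  fixes p :: real
  assumes p: "p > 1"
  shows "(\<lambda>n. cond_diff_opnorm p n) \<longlonglongrightarrow> 0"
proof (rule real_tendsto_sandwich[where f="\<lambda>_. 0" and h="\<lambda>n. ((2 * 20 powr p) * 2 powr (- real n * min (p - 1) 1)) powr (1/p)"])
  show "\<forall>\<^sub>F n in sequentially. 0 \<le> cond_diff_opnorm p n"
    using opnorm_bound[OF p] by (intro eventually_sequentiallyI[of 1]) auto
  show "\<forall>\<^sub>F n in sequentially. cond_diff_opnorm p n \<le> ((2 * 20 powr p) * 2 powr (- real n * min (p - 1) 1)) powr (1/p)"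
    using opnorm_bound[OF p] by (intro eventually_sequentiallyI[of 1]) auto
  show "(\<lambda>_. 0) \<longlonglongrightarrow> (0::real)" by simp
  define m where "m = min (p - 1) 1"
  have m0: "m > 0" unfolding m_def using p by simp
  have q: "(2::real) powr (- m) < 1" using powr_less_mono[of "-m" 0 2] m0 by simp
  have eq: "2 powr (- real n * m) = (2 powr (- m)) ^ n" for n
    by (simp add: powr_power mult_ac)
  have "(\<lambda>n. ((2::real) powr (- m)) ^ n) \<longlonglongrightarrow> 0" by (rule LIMSEQ_realpow_zero) (use q in auto)
  then have "(\<lambda>n. (2 * 20 powr p) * 2 powr (- real n * m)) \<longlonglongrightarrow> 0"
    unfolding eq by (rule tendsto_mult_right_zero)
  then show "(\<lambda>n. ((2 * 20 powr p) * 2 powr (- real n * min (p - 1) 1)) powr (1/p)) \<longlonglongrightarrow> 0"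
    unfolding m_def[symmetric] using p by (intro tendsto_zero_powrI[where b="1/p"]) auto
qed

theorem mainTheorem14:
  shows "\<not> (\<exists>N. \<forall>n\<ge>N. sets (BB n) = sets (BB 0)) \<and>
         (\<forall>p>1. (\<lambda>n. cond_diff_opnorm p n) \<longlonglongrightarrow> 0) \<and>
         (\<forall>p>(1::real). \<exists>C>0. \<forall>n\<ge>1. \<forall>f. Lp_fun p f \<longrightarrow>
           (\<integral>x. \<bar>real_cond_exp PP (BB n) f x - real_cond_exp PP (BB 0) f x\<bar> powr p \<partial>PP)
             \<le> C * 2 powr (- real n * min (p - 1) 1) * (\<integral>x. \<bar>f x\<bar> powr p \<partial>PP))"
proof (intro conjI allI impI)
  show "\<not> (\<exists>N. \<forall>n\<ge>N. sets (BB n) = sets (BB 0))" by (rule not_ult)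
next
  fix p :: real assume "p > 1" then show "(\<lambda>n. cond_diff_opnorm p n) \<longlonglongrightarrow> 0" by (rule opnorm_lim)
next
  fix p :: real assume p: "p > 1"
  show "\<exists>C>0. \<forall>n\<ge>1. \<forall>f. Lp_fun p f \<longrightarrow>
           (\<integral>x. \<bar>real_cond_exp PP (BB n) f x - real_cond_exp PP (BB 0) f x\<bar> powr p \<partial>PP)
             \<le> C * 2 powr (- real n * min (p - 1) 1) * (\<integral>x. \<bar>f x\<bar> powr p \<partial>PP)"
    using main_bound[OF p] by (intro exI[of _ "2 * 20 powr p"]) auto
qed

end
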